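(* Let $0<\theta<1$ and let $X$ be a random variable on $\{0,1,2,\dots\}$ with probability mass function \[f(x)=\frac{\theta^x}{x!}-\frac{\theta^{x+1}}{(x+1)!},\quad x=0,1,2,\dots.\] Then the moment generating function of $X$ is $M_X(t)=e^{\theta e^t}(1-e^{-t})+e^{-t}$ for all real $t$, and \[\mathbb E(X)=e^{\theta}-1,\qquad \mathrm{Var}(X)=e^{\theta}\bigl(2\theta+1-e^{\theta}\bigr).\] *)

theory Defs
  imports "HOL-Probability.Probability"
begin

end

theory Submission
  imports Defs
begin

lemma pmf_exp_sums:
  fixes p :: "nat pmf" and f :: "nat \<Rightarrow> real"
  assumes nn: "\<And>x. 0 \<le> f x" and s: "(\<lambda>x. pmf p x * f x) sums S"
  shows "measure_pmf.expectation p f = S \<and> integrable (measure_pmf p) f"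
proof -
  have S0: "0 \<le> S" using sums_le[of "\<lambda>_. 0" _ 0, OF _ sums_zero s] nn
    by (simp add: mult_nonneg_nonneg)
  have nn2: "\<And>x. 0 \<le> pmf p x * f x" using nn by simp
  have "(\<integral>\<^sup>+ x. ennreal (f x) \<partial>measure_pmf p) = (\<Sum>x. ennreal (pmf p x * f x))"
    by (simp add: nn_integral_measure_pmf nn_integral_count_space_nat ennreal_mult' nn)
  also have "\<dots> = ennreal S"
    using suminf_ennreal2[OF nn2 sums_summable[OF s]] sums_unique[OF s] by simp
  finally have eq: "(\<integral>\<^sup>+ x. ennreal (f x) \<partial>measure_pmf p) = ennreal S" .
  have "measure_pmf.expectation p f = S"
    by (subst integral_eq_nn_integral) (auto simp: eq nn S0)
  moreover have "integrable (measure_pmf p) f"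
    by (rule integrableI_nonneg) (auto simp: eq nn)
  ultimately show ?thesis by blast
qed

lemma expser: "(\<lambda>n. (x::real) ^ n / fact n) sums exp x"
  using exp_converges[of x] by (simp add: divide_inverse mult.commute)

theorem mainTheorem4:
  fixes \<theta> :: real and p :: "nat pmf"
  assumes "0 < \<theta>" and "\<theta> < 1"
    and "\<And>x. pmf p x = \<theta> ^ x / fact x - \<theta> ^ (x + 1) / fact (x + 1)"
  shows "(\<forall>t::real. measure_pmf.expectation p (\<lambda>x. exp (t * real x))
            = exp (\<theta> * exp t) * (1 - exp (- t)) + exp (- t))
    \<and> (measure_pmf.expectation p real = exp \<theta> - 1)
    \<and> (measure_pmf.variance p real = exp \<theta> * (2 * \<theta> + 1 - exp \<theta>))"
proof -
  define a where "a n = \<theta> ^ n / fact n" for n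
  have pm: "pmf p x = a x - a (Suc x)" for x using assms(3) by (simp add: a_def)
  have aS: "a (Suc n) * real (Suc n) = \<theta> * a n" for n
  proof -
    have "fact (Suc n) = (fact n::real) * (1 + real n)" by (simp add: algebra_simps)
    moreover have "(fact n::real) > 0" by simp
    moreover have "(1 + real n) > 0" by simp
    ultimately have "a (Suc n) * real (Suc n) = \<theta> ^ Suc n * (1 + real n) / ((fact n) * (1 + real n))"
      unfolding a_def by (simp del: fact_Suc)
    also have "\<dots> = \<theta> ^ Suc n / fact n" using \<open>(1 + real n) > 0\<close> by simp
    finally show ?thesis by (simp add: a_def)
  qed
  have b0: "a sums exp \<theta>" using expser unfolding a_def .
  have b0s: "(\<lambda>n. a (Suc n)) sums (exp \<theta> - 1)"
    using b0 by (subst sums_Suc_iff) (simp add: a_def)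
  have b1s: "(\<lambda>n. a (Suc n) * real (Suc n)) sums (\<theta> * exp \<theta>)"
    unfolding aS by (rule sums_mult[OF b0])
  have b1: "(\<lambda>n. a n * real n) sums (\<theta> * exp \<theta>)"
    using b1s by (subst (asm) sums_Suc_iff) simp
  have b2s: "(\<lambda>n. a (Suc n) * real (Suc n)^2) sums (\<theta> * (\<theta> * exp \<theta> + exp \<theta>))"
  proof -
    have "(\<lambda>n. \<theta> * (a n * real n + a n)) sums (\<theta> * (\<theta> * exp \<theta> + exp \<theta>))"
      by (rule sums_mult[OF sums_add[OF b1 b0]])
    moreover have "\<theta> * (a n * real n + a n) = a (Suc n) * real (Suc n)^2" for n
    proof -
      have "\<theta> * (a n * real n + a n) = real (Suc n) * (\<theta> * a n)" by (simp add: algebra_simps)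
      also have "\<dots> = a (Suc n) * real (Suc n)^2" unfolding aS[symmetric]
        by (simp only: power2_eq_square mult_ac)
      finally show ?thesis .
    qed
    ultimately show ?thesis by simp
  qed
  have mgf: "measure_pmf.expectation p (\<lambda>x. exp (t * real x))
            = exp (\<theta> * exp t) * (1 - exp (- t)) + exp (- t)" for t
  proof -
    define g where "g n = (\<theta> * exp t) ^ n / fact n" for n
    have g: "g sums exp (\<theta> * exp t)" unfolding g_def by (rule expser)
    have gs: "(\<lambda>n. exp (-t) * g (Suc n)) sums (exp (-t) * (exp (\<theta> * exp t) - 1))"
      by (rule sums_mult) (use g in \<open>subst sums_Suc_iff; simp add: g_def\<close>)
    have e: "exp (t * real n) = exp t ^ n" for n
      by (metis exp_of_nat2_mult)
    have "(\<lambda>n. g n - exp (-t) * g (Suc n)) sums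
        (exp (\<theta> * exp t) - exp (-t) * (exp (\<theta> * exp t) - 1))"
      by (rule sums_diff[OF g gs])
    moreover have "g n - exp (-t) * g (Suc n) = pmf p n * exp (t * real n)" for n
      unfolding pm g_def a_def e
      by (simp add: power_mult_distrib field_simps exp_minus)
    ultimately have "(\<lambda>n. pmf p n * exp (t * real n)) sums
        (exp (\<theta> * exp t) * (1 - exp (- t)) + exp (- t))"
      by (simp add: algebra_simps)
    then show ?thesis using pmf_exp_sums[of "\<lambda>x. exp (t * real x)"] by simp
  qed
  have "(\<lambda>n. a n * real n - (a (Suc n) * real (Suc n) - a (Suc n))) sums
      (\<theta> * exp \<theta> - (\<theta> * exp \<theta> - (exp \<theta> - 1)))"
    by (intro sums_diff b1 b1s b0s)
  moreover have "a n * real n - (a (Suc n) * real (Suc n) - a (Suc n)) = pmf p n * real n" for n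
    unfolding pm by (simp add: algebra_simps)
  ultimately have m1: "(\<lambda>n. pmf p n * real n) sums (exp \<theta> - 1)" by simp
  have E1: "measure_pmf.expectation p real = exp \<theta> - 1"
   and I1: "integrable (measure_pmf p) real"
    using pmf_exp_sums[OF _ m1] by auto
  have "(\<lambda>n. a n * real n ^ 2 - (a (Suc n) * real (Suc n)^2 - 2 * (a (Suc n) * real (Suc n)) + a (Suc n))) sums
      (\<theta> * (\<theta> * exp \<theta> + exp \<theta>) - (\<theta> * (\<theta> * exp \<theta> + exp \<theta>) - 2 * (\<theta> * exp \<theta>) + (exp \<theta> - 1)))"
  proof (intro sums_diff sums_add sums_mult b1s b0s b2s)
    show "(\<lambda>n. a n * (real n)\<^sup>2) sums (\<theta> * (\<theta> * exp \<theta> + exp \<theta>))"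
      using b2s by (subst (asm) sums_Suc_iff) simp
  qed
  moreover have "a n * real n ^ 2 - (a (Suc n) * real (Suc n)^2 - 2 * (a (Suc n) * real (Suc n)) + a (Suc n))
       = pmf p n * (real n)^2" for n
    unfolding pm by (simp add: algebra_simps power2_eq_square)
  ultimately have m2: "(\<lambda>n. pmf p n * (real n)^2) sums (2 * \<theta> * exp \<theta> - exp \<theta> + 1)"
    by (simp add: algebra_simps)
  have E2: "measure_pmf.expectation p (\<lambda>x. (real x)^2) = 2 * \<theta> * exp \<theta> - exp \<theta> + 1"
   and I2: "integrable (measure_pmf p) (\<lambda>x. (real x)^2)"
    using pmf_exp_sums[OF _ m2] by auto
  have V: "measure_pmf.variance p real = exp \<theta> * (2 * \<theta> + 1 - exp \<theta>)"
    by (subst measure_pmf.variance_eq[OF I1 I2]) (simp only: E1 E2, simp add: power2_eq_square algebra_simps)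
  show ?thesis using mgf E1 V by blast
qed

end
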